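(* Let $i_1,\dots,i_m\in\mathcal{C}l_{0,m}$ with $i_k^2=-1$, $0\le\mu\le m$, and let $\tau^{F_1,F_2}_y$ be the generalized translation defined in the context. Let $J$ be the set of arrays $\vec j=(j_{\nu,k})\in\{0,1\}^{4\times m}$ with $j_{1,k}+j_{2,k}+j_{3,k}\in\{0,2\}$ and $j_{4,k}=0$ for all $k$. Then \[ \tau^{F_1,F_2}_yf(x)=\frac{1}{4^m}\sum_{\vec j\in J}\sum_{\vec\phi,\vec\gamma\in\{0,1\}^m}c_{\vec j,\vec\phi,\vec\gamma}\prod_{k=\mu}^{1}(i_k)^{j_{1,k}}\prod_{k=1}^{\mu}(-i_k)^{j_{2,k}}\prod_{k=1}^{\mu}(-i_k)^{j_{3,k}}\;\tau_{y^{\vec\phi}}f^{\vec\gamma}(x)\;\prod_{k=\mu+1}^{m}(-i_k)^{j_{3,k}}\prod_{k=\mu+1}^{m}(-i_k)^{j_{2,k}}\prod_{k=m}^{\mu+1}(i_k)^{j_{1,k}}, \] where $\tau_{y^{\vec\phi}}f^{\vec\gamma}(x)=f^{\vec\gamma}(x-y^{\vec\phi})$, $y^{\vec\phi}=((-1)^{\phi_1}y_1,\dots,(-1)^{\phi_m}y_m)$, and $c_{\vec j,\vec\phi,\vec\gamma}=\prod_{k=1}^m(-1)^{(j_{(2\phi_k+\gamma_k+1,k)}+1)(\delta_{(j_{1,k}+j_{2,k}+j_{3,k})}-1)}$ with $\delta_{(\ell)}=1$ if $\ell=0$ and $0$ otherwise.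
   Context: $\mathcal{C}l_{0,m}$ is the real associative algebra generated by $e_1,\dots,e_m$ with $e_ie_j+e_je_i=0$ ($i\ne j$), $e_i^2=-1$; $f:\mathbb{R}^m\to\mathcal{C}l_{0,m}$ is such that all integrals below make sense. $F_1=\{i_1,\dots,i_\mu\}$, $F_2=\{i_{\mu+1},\dots,i_m\}$. $\prod_{k=a}^{b}$ with $a\le b$ is the ordered product in increasing $k$; $\prod_{k=b}^{a}$ is the product in decreasing order of $k$. The geometric Fourier transform is $\mathcal{F}_{F_1,F_2}(f)(u)=(2\pi)^{-m/2}\int_{\mathbb{R}^m}\prod_{k=1}^{\mu}e^{-i_kx_ku_k}\,f(x)\prod_{k=\mu+1}^{m}e^{-i_kx_ku_k}\,dx$ (invertible, with inverse $\mathcal{F}^{-1}_{F_1,F_2}(h)(x)=(2\pi)^{-m/2}\int\prod_{k=\mu}^{1}e^{i_kx_ku_k}h(u)\prod_{k=m}^{\mu+1}e^{i_kx_ku_k}du$). The generalized translation $\tau^{F_1,F_2}_y$ is defined by $\mathcal{F}_{F_1,F_2}(\tau^{F_1,F_2}_yf)(u)=\left(\prod_{k=1}^{\mu}e^{-i_ky_ku_k}\right)\mathcal{F}_{F_1,F_2}(f)(u)\left(\prod_{k=\mu+1}^{m}e^{-i_ky_ku_k}\right)$. For $\vec\gamma\in\{0,1\}^m$, $f^{\vec\gamma}(x)=f((-1)^{\gamma_1}x_1,\dots,(-1)^{\gamma_m}x_m)$. *)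

theory Defs
  imports "HOL-Analysis.Analysis"
begin

definition ordprod :: "nat \<Rightarrow> nat \<Rightarrow> (nat \<Rightarrow> 'a::monoid_mult) \<Rightarrow> 'a" where
  "ordprod a b g = prod_list (map g [a..<Suc b])"

definition revprod :: "nat \<Rightarrow> nat \<Rightarrow> (nat \<Rightarrow> 'a::monoid_mult) \<Rightarrow> 'a" where
  "revprod b a g = prod_list (map g (rev [a..<Suc b]))"

definition blade :: "(nat \<Rightarrow> 'a::monoid_mult) \<Rightarrow> nat set \<Rightarrow> 'a" where
  "blade e A = prod_list (map e (sorted_list_of_set A))"

text \<open>The real algebra 'a, with generators e_1..e_m, is (isomorphic to) Cl_{0,m}:
  e_k^2 = -1, e_k e_l + e_l e_k = 0 (k \<noteq> l), and the 2^m blades form a real basis.\<close>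
definition is_Clifford_0m :: "nat \<Rightarrow> (nat \<Rightarrow> 'a::real_algebra_1) \<Rightarrow> bool" where
  "is_Clifford_0m m e \<longleftrightarrow>
     (\<forall>k\<in>{1..m}. e k * e k = -1) \<and>
     (\<forall>k\<in>{1..m}. \<forall>l\<in>{1..m}. k \<noteq> l \<longrightarrow> e k * e l + e l * e k = 0) \<and>
     inj_on (blade e) (Pow {1..m}) \<and>
     \<not> dependent (blade e ` Pow {1..m}) \<and>
     span (blade e ` Pow {1..m}) = UNIV"

text \<open>Lebesgue measure on R^m, points being (extensional) functions on {1..m}.\<close>
definition Rm :: "nat \<Rightarrow> (nat \<Rightarrow> real) measure" where
  "Rm m = Pi\<^sub>M {1..m} (\<lambda>_. lborel)"

type_synonym 'a clf = "(nat \<Rightarrow> real) \<Rightarrow> 'a"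

text \<open>Geometric Fourier transform F_{F1,F2}, F1 = {i_1..i_mu}, F2 = {i_(mu+1)..i_m}.\<close>
definition geo_FT :: "nat \<Rightarrow> nat \<Rightarrow> (nat \<Rightarrow> 'a::{real_normed_algebra_1,banach,second_countable_topology})
    \<Rightarrow> 'a clf \<Rightarrow> 'a clf" where
  "geo_FT m \<mu> i f u = (2 * pi) powr (- real m / 2) *\<^sub>R
     (\<integral>x. ordprod 1 \<mu> (\<lambda>k. exp ((- (x k * u k)) *\<^sub>R i k)) * f x
           * ordprod (Suc \<mu>) m (\<lambda>k. exp ((- (x k * u k)) *\<^sub>R i k)) \<partial>Rm m)"

definition geo_IFT :: "nat \<Rightarrow> nat \<Rightarrow> (nat \<Rightarrow> 'a::{real_normed_algebra_1,banach,second_countable_topology})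
    \<Rightarrow> 'a clf \<Rightarrow> 'a clf" where
  "geo_IFT m \<mu> i h x = (2 * pi) powr (- real m / 2) *\<^sub>R
     (\<integral>u. revprod \<mu> 1 (\<lambda>k. exp ((x k * u k) *\<^sub>R i k)) * h u
           * revprod m (Suc \<mu>) (\<lambda>k. exp ((x k * u k) *\<^sub>R i k)) \<partial>Rm m)"

definition gen_transl :: "nat \<Rightarrow> nat \<Rightarrow> (nat \<Rightarrow> 'a::{real_normed_algebra_1,banach,second_countable_topology})
    \<Rightarrow> (nat \<Rightarrow> real) \<Rightarrow> 'a clf \<Rightarrow> 'a clf" where
  "gen_transl m \<mu> i y f = geo_IFT m \<mu> i
     (\<lambda>u. ordprod 1 \<mu> (\<lambda>k. exp ((- (y k * u k)) *\<^sub>R i k)) * geo_FT m \<mu> i f u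
          * ordprod (Suc \<mu>) m (\<lambda>k. exp ((- (y k * u k)) *\<^sub>R i k)))"

definition reflect :: "nat \<Rightarrow> (nat \<Rightarrow> nat) \<Rightarrow> (nat \<Rightarrow> real) \<Rightarrow> (nat \<Rightarrow> real)" where
  "reflect m \<gamma> x = (\<lambda>k\<in>{1..m}. (-1) ^ (\<gamma> k) * x k)"

definition fgam :: "nat \<Rightarrow> (nat \<Rightarrow> nat) \<Rightarrow> 'a clf \<Rightarrow> 'a clf" where
  "fgam m \<gamma> f = (\<lambda>x. f (reflect m \<gamma> x))"

definition transl :: "nat \<Rightarrow> (nat \<Rightarrow> real) \<Rightarrow> 'a clf \<Rightarrow> 'a clf" where
  "transl m z g = (\<lambda>x. g (\<lambda>k\<in>{1..m}. x k - z k))"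

definition bits :: "nat \<Rightarrow> (nat \<Rightarrow> nat) set" where
  "bits m = {1..m} \<rightarrow>\<^sub>E {0,1}"

definition jset :: "nat \<Rightarrow> (nat \<times> nat \<Rightarrow> nat) set" where
  "jset m = {j \<in> ({1..4} \<times> {1..m}) \<rightarrow>\<^sub>E {0,1}.
      \<forall>k\<in>{1..m}. j (1,k) + j (2,k) + j (3,k) \<in> {0,2} \<and> j (4,k) = 0}"

definition kdelta :: "nat \<Rightarrow> int" where
  "kdelta l = (if l = 0 then 1 else 0)"

definition coef :: "nat \<Rightarrow> (nat \<times> nat \<Rightarrow> nat) \<Rightarrow> (nat \<Rightarrow> nat) \<Rightarrow> (nat \<Rightarrow> nat) \<Rightarrow> real" where
  "coef m j \<phi> \<gamma> = (\<Prod>k=1..m. (-1::real) powi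
      ((int (j (2 * \<phi> k + \<gamma> k + 1, k)) + 1) * (kdelta (j (1,k) + j (2,k) + j (3,k)) - 1)))"

end

theory Submission
  imports Defs
begin


lemma exp_sq_m1:
  fixes q :: "'a::{real_normed_algebra_1,banach}"
  assumes q: "q * q = -1"
  shows "exp (t *\<^sub>R q) = cos t *\<^sub>R 1 + sin t *\<^sub>R q"
proof -
  have qp: "q ^ (2*k) = (-1)^k *\<^sub>R 1 \<and> q ^ (2*k+1) = (-1)^k *\<^sub>R q" for k
  proof (induction k)
    case 0 then show ?case by simp
  next
    case (Suc k)
    have e: "q ^ (2*Suc k) = (q*q) * q^(2*k)"
      by (metis mult_Suc_right add_2_eq_Suc power_add power2_eq_square)
    have o: "q ^ (2*Suc k+1) = q ^ (2*Suc k) * q" by (simp only: Suc_eq_plus1[symmetric] power_Suc2)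
    show ?case using Suc unfolding o e q by simp
  qed
  have tm: "(t *\<^sub>R q)^n /\<^sub>R fact n = (cos_coeff n * t^n) *\<^sub>R 1 + (sin_coeff n * t^n) *\<^sub>R q" for n
  proof (cases "even n")
    case True
    then obtain k where k: "n = 2*k" by blast
    show ?thesis unfolding scaleR_power k using qp[of k]
      by (simp add: cos_coeff_def sin_coeff_def field_simps)
  next
    case False
    then obtain k where k: "n = 2*k+1" by (meson oddE)
    show ?thesis unfolding scaleR_power k using qp[of k]
      by (simp add: cos_coeff_def sin_coeff_def field_simps)
  qed
  have "(\<lambda>n. (cos_coeff n * t^n) *\<^sub>R 1 + (sin_coeff n * t^n) *\<^sub>R q) sums (cos t *\<^sub>R 1 + sin t *\<^sub>R q)"
    by (intro sums_add sums_scaleR_left) (use cos_converges[of t] sin_converges[of t] in auto)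
  moreover have "(\<lambda>n. (t *\<^sub>R q)^n /\<^sub>R fact n) sums exp (t *\<^sub>R q)" by (rule exp_converges)
  ultimately show ?thesis using tm sums_unique2 by fastforce
qed


lemma prod_list_sum_expand:
  fixes g :: "nat \<Rightarrow> 'b \<Rightarrow> 'a::ring_1"
  assumes "distinct l"
  shows "prod_list (map (\<lambda>k. \<Sum>s\<in>S k. g k s) l) = (\<Sum>\<sigma>\<in>PiE (set l) S. prod_list (map (\<lambda>k. g k (\<sigma> k)) l))"
  using assms
proof (induction l)
  case Nil
  then show ?case by simp
next
  case (Cons k l)
  then have kl: "k \<notin> set l" and d: "distinct l" by auto
  have eq: "prod_list (map (\<lambda>k'. g k' ((\<sigma>(k:=s)) k')) l) = prod_list (map (\<lambda>k'. g k' (\<sigma> k')) l)" for \<sigma> s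
    using kl by (intro arg_cong[where f=prod_list] map_cong) auto
  have "(\<Sum>\<sigma>\<in>PiE (set (k#l)) S. prod_list (map (\<lambda>k. g k (\<sigma> k)) (k#l)))
      = (\<Sum>\<sigma>\<in>(\<lambda>(y, g). g(k := y)) ` (S k \<times> PiE (set l) S). prod_list (map (\<lambda>k. g k (\<sigma> k)) (k#l)))"
    by (simp add: PiE_insert_eq)
  also have "\<dots> = (\<Sum>p\<in>S k \<times> PiE (set l) S. (\<lambda>\<sigma>. prod_list (map (\<lambda>k. g k (\<sigma> k)) (k#l))) ((\<lambda>(y, g). g(k := y)) p))"
    by (rule sum.reindex[OF inj_combinator[OF kl], unfolded comp_def])
  also have "\<dots> = (\<Sum>p\<in>S k \<times> PiE (set l) S. g k (fst p) * prod_list (map (\<lambda>k'. g k' (snd p k')) l))"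
  proof (rule sum.cong[OF refl])
    fix p assume "p \<in> S k \<times> PiE (set l) S"
    obtain s \<sigma> where p: "p = (s, \<sigma>)" by (cases p)
    show "(\<lambda>\<sigma>. prod_list (map (\<lambda>k. g k (\<sigma> k)) (k#l))) ((\<lambda>(y, g). g(k := y)) p) = g k (fst p) * prod_list (map (\<lambda>k'. g k' (snd p k')) l)"
      unfolding p using eq[of \<sigma> s] by simp
  qed
  also have "\<dots> = (\<Sum>s\<in>S k. \<Sum>\<sigma>\<in>PiE (set l) S. g k s * prod_list (map (\<lambda>k'. g k' (\<sigma> k')) l))"
    by (simp only: sum.cartesian_product case_prod_beta')
  also have "\<dots> = (\<Sum>s\<in>S k. g k s) * prod_list (map (\<lambda>k. \<Sum>s\<in>S k. g k s) l)"
    using Cons.IH[OF d] by (simp add: sum_distrib_left sum_distrib_right) (rule sum.swap)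
  finally show ?case by simp
qed


lemma sum_PiE_split:
  assumes "A \<inter> B = {}"
  shows "(\<Sum>\<sigma>\<in>PiE (A \<union> B) S. h (restrict \<sigma> A) (restrict \<sigma> B)) = (\<Sum>\<sigma>1\<in>PiE A S. \<Sum>\<sigma>2\<in>PiE B S. h \<sigma>1 \<sigma>2)"
proof -
  have key: "restrict (\<lambda>k. if k \<in> A then fst p k else snd p k) A = fst p \<and>
             restrict (\<lambda>k. if k \<in> A then fst p k else snd p k) B = snd p"
    if p: "p \<in> PiE A S \<times> PiE B S" for p
  proof -
    obtain p1 p2 where pp: "p = (p1,p2)" by (cases p)
    have p1: "p1 \<in> PiE A S" and p2: "p2 \<in> PiE B S" using p pp by auto
    have "restrict (\<lambda>k. if k \<in> A then p1 k else p2 k) A = p1"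
    proof (rule ext)
      fix k show "restrict (\<lambda>k. if k \<in> A then p1 k else p2 k) A k = p1 k"
        by (cases "k \<in> A") (simp_all add: PiE_arb[OF p1])
    qed
    moreover have "restrict (\<lambda>k. if k \<in> A then p1 k else p2 k) B = p2"
    proof (rule ext)
      fix k show "restrict (\<lambda>k. if k \<in> A then p1 k else p2 k) B k = p2 k"
        using assms by (cases "k \<in> B") (auto simp: PiE_arb[OF p2])
    qed
    ultimately show ?thesis unfolding pp fst_conv snd_conv by (rule conjI)
  qed
  have "(\<Sum>\<sigma>1\<in>PiE A S. \<Sum>\<sigma>2\<in>PiE B S. h \<sigma>1 \<sigma>2) = (\<Sum>p\<in>PiE A S \<times> PiE B S. h (fst p) (snd p))"
    by (simp only: sum.cartesian_product case_prod_beta')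
  also have "\<dots> = (\<Sum>\<sigma>\<in>PiE (A \<union> B) S. h (restrict \<sigma> A) (restrict \<sigma> B))"
  proof (rule sum.reindex_bij_witness[where i="\<lambda>\<sigma>. (restrict \<sigma> A, restrict \<sigma> B)"
        and j="\<lambda>p k. if k \<in> A then fst p k else snd p k"])
    fix \<sigma> assume s: "\<sigma> \<in> PiE (A \<union> B) S"
    show "(\<lambda>k. if k \<in> A then fst (restrict \<sigma> A, restrict \<sigma> B) k else snd (restrict \<sigma> A, restrict \<sigma> B) k) = \<sigma>"
    proof (rule ext)
      fix k show "(if k \<in> A then fst (restrict \<sigma> A, restrict \<sigma> B) k else snd (restrict \<sigma> A, restrict \<sigma> B) k) = \<sigma> k"
        by (cases "k \<in> A"; cases "k \<in> B") (simp_all add: PiE_arb[OF s])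
    qed
  next
    fix \<sigma> assume "\<sigma> \<in> PiE (A \<union> B) S"
    then show "(restrict \<sigma> A, restrict \<sigma> B) \<in> PiE A S \<times> PiE B S" by (auto simp: PiE_iff)
  next
    fix p assume p: "p \<in> PiE A S \<times> PiE B S"
    then show "(restrict (\<lambda>k. if k \<in> A then fst p k else snd p k) A, restrict (\<lambda>k. if k \<in> A then fst p k else snd p k) B) = p"
      using key[OF p] by (simp add: prod_eq_iff)
  next
    fix p assume p: "p \<in> PiE A S \<times> PiE B S"
    show "(\<lambda>k. if k \<in> A then fst p k else snd p k) \<in> PiE (A \<union> B) S"
    proof (rule PiE_I)
      fix k assume "k \<in> A \<union> B" then show "(if k \<in> A then fst p k else snd p k) \<in> S k"
        using p by (cases "k \<in> A") (auto simp: mem_Times_iff)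
    next
      fix k assume "k \<notin> A \<union> B" then show "(if k \<in> A then fst p k else snd p k) = undefined"
        using p PiE_arb[of "snd p" B S k] by (simp add: mem_Times_iff)
    qed
  next
    fix p assume p: "p \<in> PiE A S \<times> PiE B S"
    then show "h (restrict (\<lambda>k. if k \<in> A then fst p k else snd p k) A) (restrict (\<lambda>k. if k \<in> A then fst p k else snd p k) B) = h (fst p) (snd p)"
      using key[OF p] by simp
  qed
  finally show ?thesis by simp
qed


lemma sum_PiE_pair:
  "(\<Sum>\<phi>\<in>PiE K S. \<Sum>\<gamma>\<in>PiE K T. H \<phi> \<gamma>) = (\<Sum>\<sigma>\<in>PiE K (\<lambda>k. S k \<times> T k). H (\<lambda>k\<in>K. fst (\<sigma> k)) (\<lambda>k\<in>K. snd (\<sigma> k)))"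
proof -
  have key: "(\<lambda>k\<in>K. fst ((\<lambda>k\<in>K. (fst p k, snd p k)) k)) = fst p \<and> (\<lambda>k\<in>K. snd ((\<lambda>k\<in>K. (fst p k, snd p k)) k)) = snd p"
    if p: "p \<in> PiE K S \<times> PiE K T" for p
  proof -
    obtain p1 p2 where pp: "p = (p1,p2)" by (cases p)
    have p1: "p1 \<in> PiE K S" and p2: "p2 \<in> PiE K T" using p pp by auto
    have "restrict (\<lambda>k. fst ((\<lambda>k\<in>K. (p1 k, p2 k)) k)) K = p1"
    proof (rule ext)
      fix k show "restrict (\<lambda>k. fst ((\<lambda>k\<in>K. (p1 k, p2 k)) k)) K k = p1 k"
        by (cases "k \<in> K") (simp_all add: PiE_arb[OF p1] PiE_arb[OF p2])
    qed
    moreover have "restrict (\<lambda>k. snd ((\<lambda>k\<in>K. (p1 k, p2 k)) k)) K = p2"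
    proof (rule ext)
      fix k show "restrict (\<lambda>k. snd ((\<lambda>k\<in>K. (p1 k, p2 k)) k)) K k = p2 k"
        by (cases "k \<in> K") (simp_all add: PiE_arb[OF p1] PiE_arb[OF p2])
    qed
    ultimately show ?thesis unfolding pp fst_conv snd_conv by (rule conjI)
  qed
  have "(\<Sum>\<phi>\<in>PiE K S. \<Sum>\<gamma>\<in>PiE K T. H \<phi> \<gamma>) = (\<Sum>p\<in>PiE K S \<times> PiE K T. H (fst p) (snd p))"
    by (simp only: sum.cartesian_product case_prod_beta')
  also have "\<dots> = (\<Sum>\<sigma>\<in>PiE K (\<lambda>k. S k \<times> T k). H (\<lambda>k\<in>K. fst (\<sigma> k)) (\<lambda>k\<in>K. snd (\<sigma> k)))"
  proof (rule sum.reindex_bij_witness[where i="\<lambda>\<sigma>. (\<lambda>k\<in>K. fst (\<sigma> k), \<lambda>k\<in>K. snd (\<sigma> k))"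
        and j="\<lambda>p. \<lambda>k\<in>K. (fst p k, snd p k)"])
    fix \<sigma> assume s: "\<sigma> \<in> PiE K (\<lambda>k. S k \<times> T k)"
    show "(\<lambda>k\<in>K. (fst (\<lambda>k\<in>K. fst (\<sigma> k), \<lambda>k\<in>K. snd (\<sigma> k)) k, snd (\<lambda>k\<in>K. fst (\<sigma> k), \<lambda>k\<in>K. snd (\<sigma> k)) k)) = \<sigma>"
    proof (rule ext)
      fix k show "(\<lambda>k\<in>K. (fst (\<lambda>k\<in>K. fst (\<sigma> k), \<lambda>k\<in>K. snd (\<sigma> k)) k, snd (\<lambda>k\<in>K. fst (\<sigma> k), \<lambda>k\<in>K. snd (\<sigma> k)) k)) k = \<sigma> k"
        by (cases "k \<in> K") (simp_all add: PiE_arb[OF s])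
    qed
  next
    fix \<sigma> assume "\<sigma> \<in> PiE K (\<lambda>k. S k \<times> T k)"
    then show "(\<lambda>k\<in>K. fst (\<sigma> k), \<lambda>k\<in>K. snd (\<sigma> k)) \<in> PiE K S \<times> PiE K T"
      by (auto simp: PiE_iff mem_Times_iff)
  next
    fix p assume p: "p \<in> PiE K S \<times> PiE K T"
    show "(\<lambda>k\<in>K. fst ((\<lambda>k\<in>K. (fst p k, snd p k)) k), \<lambda>k\<in>K. snd ((\<lambda>k\<in>K. (fst p k, snd p k)) k)) = p"
      using key[OF p] by (simp add: prod_eq_iff)
  next
    fix p assume "p \<in> PiE K S \<times> PiE K T"
    then show "(\<lambda>k\<in>K. (fst p k, snd p k)) \<in> PiE K (\<lambda>k. S k \<times> T k)" by (auto simp: PiE_iff)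
  next
    fix p assume p: "p \<in> PiE K S \<times> PiE K T"
    show "H (\<lambda>k\<in>K. fst ((\<lambda>k\<in>K. (fst p k, snd p k)) k)) (\<lambda>k\<in>K. snd ((\<lambda>k\<in>K. (fst p k, snd p k)) k)) = H (fst p) (snd p)"
      using key[OF p] by simp
  qed
  finally show ?thesis .
qed


lemma prod_list_scaleR:
  fixes g :: "nat \<Rightarrow> 'a::real_algebra_1"
  shows "prod_list (map (\<lambda>k. a k *\<^sub>R g k) l) = prod_list (map a l) *\<^sub>R prod_list (map g l)"
  by (induction l) auto


lemma prod_list_restrict:
  assumes "set l \<subseteq> K"
  shows "prod_list (map (\<lambda>k. g k (restrict \<sigma> K k)) l) = prod_list (map (\<lambda>k. g k (\<sigma> k)) l)"
  using assms by (intro arg_cong[where f=prod_list] map_cong) auto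


lemma prod_list_telescope:
  fixes a b :: "nat \<Rightarrow> 'a::monoid_mult"
  assumes "\<forall>k\<in>set l. a k * b k = 1"
  shows "prod_list (map a l) * prod_list (map b (rev l)) = 1"
  using assms
proof (induction l)
  case Nil then show ?case by simp
next
  case (Cons k l)
  have "prod_list (map a (k#l)) * prod_list (map b (rev (k#l))) = a k * (prod_list (map a l) * prod_list (map b (rev l))) * b k"
    by (simp add: mult.assoc)
  also have "\<dots> = 1" using Cons by simp
  finally show ?case .
qed


lemma norm_prod_list_le:
  fixes g :: "nat \<Rightarrow> 'a::real_normed_algebra_1"
  assumes "\<forall>k\<in>set l. norm (g k) \<le> B k"
  shows "norm (prod_list (map g l)) \<le> prod_list (map B l)"
  using assms
proof (induction l)
  case Nil then show ?case by simp
next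
  case (Cons k l)
  have B0: "0 \<le> B k" using Cons.prems norm_ge_zero[of "g k"] by (metis list.set_intros(1) order_trans)
  have "norm (prod_list (map g (k#l))) \<le> norm (g k) * norm (prod_list (map g l))"
    by (simp add: norm_mult_ineq)
  also have "\<dots> \<le> B k * prod_list (map B l)"
    using Cons B0 by (intro mult_mono) auto
  finally show ?case by simp
qed




lemma sum_01_01: "(\<Sum>s\<in>{0::nat,1}\<times>{0::nat,1}. h s) = h (0,0) + h (0,1) + h (1,0) + h (1,1)"
proof -
  have "{0::nat,1}\<times>{0::nat,1} = {(0,0),(0,1),(1,0),(1,1)}" by auto
  then show ?thesis by (simp add: algebra_simps)
qed

lemma perk_real:
  fixes X Y U :: real and J :: "nat \<Rightarrow> nat"
  assumes J: "(J 1, J 2, J 3) \<in> {(0,0,0),(1,1,0),(1,0,1),(0,1,1)}" and J4: "J 4 = 0"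
  defines "c \<equiv> \<lambda>s::nat\<times>nat. (-1::real) powi ((int (J (2*fst s + snd s + 1)) + 1) * (kdelta (J 1 + J 2 + J 3) - 1))"
  defines "w \<equiv> \<lambda>s::nat\<times>nat. ((-1)^snd s * (X - (-1)^fst s * Y)) * U"
  defines "sc \<equiv> (if J 1 = 0 then cos (X*U) else sin (X*U)) * (if J 2 = 0 then cos (Y*U) else sin (Y*U))"
  shows "(\<Sum>s\<in>{0,1}\<times>{0,1}. c s * cos (w s)) = (if J 3 = 0 then 4 * sc else 0) \<and>
         (\<Sum>s\<in>{0,1}\<times>{0,1}. c s * sin (w s)) = (if J 3 = 0 then 0 else 4 * sc)"
proof -
  have i: "2*(0::nat)+0+1 = 1" "2*(0::nat)+1+1 = 2" "2*(1::nat)+0+1 = 3" "2*(1::nat)+1+1 = 4" by simp_all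
  have e: "(\<Sum>s\<in>{0,1}\<times>{0,1}. c s * cos (w s)) =
      c (0,0) * cos (w (0,0)) + c (0,1) * cos (w (0,1)) + c (1,0) * cos (w (1,0)) + c (1,1) * cos (w (1,1))"
    "(\<Sum>s\<in>{0,1}\<times>{0,1}. c s * sin (w s)) =
      c (0,0) * sin (w (0,0)) + c (0,1) * sin (w (0,1)) + c (1,0) * sin (w (1,0)) + c (1,1) * sin (w (1,1))"
    by (rule sum_01_01)+
  have cc: "c (0,0) = (-1::real) powi ((int (J 1) + 1) * (kdelta (J 1 + J 2 + J 3) - 1))"
     "c (0,1) = (-1::real) powi ((int (J 2) + 1) * (kdelta (J 1 + J 2 + J 3) - 1))"
     "c (1,0) = (-1::real) powi ((int (J 3) + 1) * (kdelta (J 1 + J 2 + J 3) - 1))"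
     "c (1,1) = (-1::real) powi ((int (J 4) + 1) * (kdelta (J 1 + J 2 + J 3) - 1))"
    unfolding c_def fst_conv snd_conv i by simp_all
  have ww: "w (0,0) = X*U - Y*U" "w (0,1) = -(X*U - Y*U)" "w (1,0) = X*U + Y*U" "w (1,1) = -(X*U + Y*U)"
    unfolding w_def by (simp_all add: algebra_simps)
  show ?thesis unfolding e cc ww sc_def using J J4
    by (auto simp: kdelta_def cos_add cos_diff sin_add sin_diff algebra_simps)
qed




definition hx :: "(nat\<Rightarrow>real) \<Rightarrow> (nat\<Rightarrow>real) \<Rightarrow> (nat \<Rightarrow> 'a::real_algebra_1) \<Rightarrow> nat \<Rightarrow> nat \<Rightarrow> 'a" where
  "hx x u i k a = (if a = 0 then cos (x k * u k) else sin (x k * u k)) *\<^sub>R (i k ^ a)"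

definition hy :: "(nat\<Rightarrow>real) \<Rightarrow> (nat\<Rightarrow>real) \<Rightarrow> (nat \<Rightarrow> 'a::real_algebra_1) \<Rightarrow> nat \<Rightarrow> nat \<Rightarrow> 'a" where
  "hy y u i k b = (if b = 0 then cos (y k * u k) else sin (y k * u k)) *\<^sub>R ((- i k) ^ b)"

lemma Ex_sum:
  fixes i :: "nat \<Rightarrow> 'a::{real_normed_algebra_1,banach}"
  assumes "i k * i k = -1"
  shows "exp ((x k * u k) *\<^sub>R i k) = (\<Sum>a\<in>{0,1}. hx x u i k a)"
  using exp_sq_m1[OF assms] by (simp add: hx_def)

lemma Ey_sum:
  fixes i :: "nat \<Rightarrow> 'a::{real_normed_algebra_1,banach}"
  assumes "i k * i k = -1"
  shows "exp ((- (y k * u k)) *\<^sub>R i k) = (\<Sum>b\<in>{0,1}. hy y u i k b)"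
proof -
  have "exp ((- (y k * u k)) *\<^sub>R i k) = cos (- (y k * u k)) *\<^sub>R 1 + sin (- (y k * u k)) *\<^sub>R i k"
    by (rule exp_sq_m1[OF assms])
  then show ?thesis by (simp add: hy_def)
qed

lemma expand_list:
  fixes h :: "nat \<Rightarrow> 'b \<Rightarrow> 'a::ring_1"
  assumes "distinct l" "\<forall>k\<in>set l. g k = (\<Sum>s\<in>S. h k s)"
  shows "prod_list (map g l) = (\<Sum>\<sigma>\<in>PiE (set l) (\<lambda>_. S). prod_list (map (\<lambda>k. h k (\<sigma> k)) l))"
proof -
  have "prod_list (map g l) = prod_list (map (\<lambda>k. \<Sum>s\<in>S. h k s) l)"
    using assms(2) by (intro arg_cong[where f=prod_list] map_cong) auto
  also have "\<dots> = (\<Sum>\<sigma>\<in>PiE (set l) (\<lambda>_. S). prod_list (map (\<lambda>k. h k (\<sigma> k)) l))"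
    by (rule prod_list_sum_expand[OF assms(1)])
  finally show ?thesis .
qed

lemma set_l1: "set (rev [1..<Suc \<mu>]) = {1..\<mu>}" "set [1..<Suc \<mu>] = {1..\<mu>}"
  by auto
lemma set_l2: "set (rev [Suc \<mu>..<Suc m]) = {Suc \<mu>..m}" "set [Suc \<mu>..<Suc m] = {Suc \<mu>..m}"
  by auto

lemma bits_split: "\<mu> \<le> m \<Longrightarrow> bits m = PiE ({1..\<mu>} \<union> {Suc \<mu>..m}) (\<lambda>_. {0,1})"
  unfolding bits_def by (rule arg_cong[where f="\<lambda>A. PiE A _"]) auto

definition XX where
  "XX \<mu> m x y u i F a b = revprod \<mu> 1 (\<lambda>k. hx x u i k (a k)) *
      (ordprod 1 \<mu> (\<lambda>k. hy y u i k (b k)) * F * ordprod (Suc \<mu>) m (\<lambda>k. hy y u i k (b k))) *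
      revprod m (Suc \<mu>) (\<lambda>k. hx x u i k (a k))"

lemma distrib4:
  fixes F :: "'a::ring_1"
  shows "(\<Sum>a1\<in>A1. f1 a1) * ((\<Sum>b1\<in>B1. f2 b1) * F * (\<Sum>b2\<in>B2. f3 b2)) * (\<Sum>a2\<in>A2. f4 a2) =
   (\<Sum>a1\<in>A1. \<Sum>b1\<in>B1. \<Sum>b2\<in>B2. \<Sum>a2\<in>A2. f1 a1 * (f2 b1 * F * f3 b2) * f4 a2)"
  by (simp only: sum_distrib_left[symmetric] sum_distrib_right[symmetric])

lemma LEXP:
  fixes i :: "nat \<Rightarrow> 'a::{real_normed_algebra_1,banach}"
  assumes mu: "\<mu> \<le> m" and ii: "\<forall>k\<in>{1..m}. i k * i k = -1"
  shows "revprod \<mu> 1 (\<lambda>k. exp ((x k * u k) *\<^sub>R i k)) *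
     (ordprod 1 \<mu> (\<lambda>k. exp ((- (y k * u k)) *\<^sub>R i k)) * F * ordprod (Suc \<mu>) m (\<lambda>k. exp ((- (y k * u k)) *\<^sub>R i k))) *
     revprod m (Suc \<mu>) (\<lambda>k. exp ((x k * u k) *\<^sub>R i k))
   = (\<Sum>a\<in>bits m. \<Sum>b\<in>bits m. XX \<mu> m x y u i F a b)"
proof -
  define K1 where "K1 = {1..\<mu>}"
  define K2 where "K2 = {Suc \<mu>..m}"
  define B where "B = (\<lambda>_::nat. {0::nat,1})"
  define P1 where "P1 = (\<lambda>a. revprod \<mu> 1 (\<lambda>k. hx x u i k (a k)))"
  define P2 where "P2 = (\<lambda>b. ordprod 1 \<mu> (\<lambda>k. hy y u i k (b k)))"
  define P3 where "P3 = (\<lambda>b. ordprod (Suc \<mu>) m (\<lambda>k. hy y u i k (b k)))"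
  define P4 where "P4 = (\<lambda>a. revprod m (Suc \<mu>) (\<lambda>k. hx x u i k (a k)))"
  have dK: "K1 \<inter> K2 = {}" unfolding K1_def K2_def by auto
  have K1m: "K1 \<subseteq> {1..m}" and K2m: "K2 \<subseteq> {1..m}" using mu unfolding K1_def K2_def by auto
  have e1: "revprod \<mu> 1 (\<lambda>k. exp ((x k * u k) *\<^sub>R i k)) = (\<Sum>a\<in>PiE K1 B. P1 a)"
  proof -
    have "revprod \<mu> 1 (\<lambda>k. exp ((x k * u k) *\<^sub>R i k)) = (\<Sum>\<sigma>\<in>PiE (set (rev [1..<Suc \<mu>])) (\<lambda>_. {0,1}). prod_list (map (\<lambda>k. hx x u i k (\<sigma> k)) (rev [1..<Suc \<mu>])))"
      unfolding revprod_def by (rule expand_list) (simp, intro ballI Ex_sum, use ii mu in auto)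
    then show ?thesis unfolding P1_def B_def K1_def K2_def set_l1 revprod_def .
  qed
  have e2: "ordprod 1 \<mu> (\<lambda>k. exp ((- (y k * u k)) *\<^sub>R i k)) = (\<Sum>b\<in>PiE K1 B. P2 b)"
  proof -
    have "ordprod 1 \<mu> (\<lambda>k. exp ((- (y k * u k)) *\<^sub>R i k)) = (\<Sum>\<sigma>\<in>PiE (set ([1..<Suc \<mu>])) (\<lambda>_. {0,1}). prod_list (map (\<lambda>k. hy y u i k (\<sigma> k)) ([1..<Suc \<mu>])))"
      unfolding ordprod_def by (rule expand_list) (simp, intro ballI Ey_sum, use ii mu in auto)
    then show ?thesis unfolding P2_def B_def K1_def K2_def set_l1 ordprod_def .
  qed
  have e3: "ordprod (Suc \<mu>) m (\<lambda>k. exp ((- (y k * u k)) *\<^sub>R i k)) = (\<Sum>b\<in>PiE K2 B. P3 b)"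
  proof -
    have "ordprod (Suc \<mu>) m (\<lambda>k. exp ((- (y k * u k)) *\<^sub>R i k)) = (\<Sum>\<sigma>\<in>PiE (set ([Suc \<mu>..<Suc m])) (\<lambda>_. {0,1}). prod_list (map (\<lambda>k. hy y u i k (\<sigma> k)) ([Suc \<mu>..<Suc m])))"
      unfolding ordprod_def by (rule expand_list) (simp, intro ballI Ey_sum, use ii mu in auto)
    then show ?thesis unfolding P3_def B_def K1_def K2_def set_l2 ordprod_def .
  qed
  have e4: "revprod m (Suc \<mu>) (\<lambda>k. exp ((x k * u k) *\<^sub>R i k)) = (\<Sum>a\<in>PiE K2 B. P4 a)"
  proof -
    have "revprod m (Suc \<mu>) (\<lambda>k. exp ((x k * u k) *\<^sub>R i k)) = (\<Sum>\<sigma>\<in>PiE (set (rev [Suc \<mu>..<Suc m])) (\<lambda>_. {0,1}). prod_list (map (\<lambda>k. hx x u i k (\<sigma> k)) (rev [Suc \<mu>..<Suc m])))"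
      unfolding revprod_def by (rule expand_list) (simp, intro ballI Ex_sum, use ii mu in auto)
    then show ?thesis unfolding P4_def B_def K1_def K2_def set_l2 revprod_def .
  qed
  have r1: "P1 (restrict a K1) = P1 a" for a
    unfolding P1_def revprod_def K1_def by (rule prod_list_restrict) auto
  have r2: "P2 (restrict a K1) = P2 a" for a
    unfolding P2_def ordprod_def K1_def by (rule prod_list_restrict) auto
  have r3: "P3 (restrict a K2) = P3 a" for a
    unfolding P3_def ordprod_def K2_def by (rule prod_list_restrict) auto
  have r4: "P4 (restrict a K2) = P4 a" for a
    unfolding P4_def revprod_def K2_def by (rule prod_list_restrict) auto
  have XXeq: "XX \<mu> m x y u i F a b = P1 (restrict a K1) * (P2 (restrict b K1) * F * P3 (restrict b K2)) * P4 (restrict a K2)" for a b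
    unfolding r1 r2 r3 r4 by (simp add: XX_def P1_def P2_def P3_def P4_def)
  have bm: "bits m = PiE (K1 \<union> K2) B" unfolding K1_def K2_def B_def using bits_split[OF mu] .
  have "(\<Sum>a\<in>bits m. \<Sum>b\<in>bits m. XX \<mu> m x y u i F a b)
     = (\<Sum>a\<in>PiE (K1 \<union> K2) B. \<Sum>b1\<in>PiE K1 B. \<Sum>b2\<in>PiE K2 B. P1 (restrict a K1) * (P2 b1 * F * P3 b2) * P4 (restrict a K2))"
    unfolding bm XXeq
    by (rule sum.cong[OF refl], rule sum_PiE_split[OF dK])
  also have "\<dots> = (\<Sum>a1\<in>PiE K1 B. \<Sum>a2\<in>PiE K2 B. \<Sum>b1\<in>PiE K1 B. \<Sum>b2\<in>PiE K2 B. P1 a1 * (P2 b1 * F * P3 b2) * P4 a2)"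
    by (rule sum_PiE_split[OF dK, where h="\<lambda>a1 a2. \<Sum>b1\<in>PiE K1 B. \<Sum>b2\<in>PiE K2 B. P1 a1 * (P2 b1 * F * P3 b2) * P4 a2"])
  also have "\<dots> = (\<Sum>a1\<in>PiE K1 B. \<Sum>b1\<in>PiE K1 B. \<Sum>b2\<in>PiE K2 B. \<Sum>a2\<in>PiE K2 B. P1 a1 * (P2 b1 * F * P3 b2) * P4 a2)"
    apply (rule sum.cong[OF refl])
    apply (rule trans[OF sum.swap])
    apply (rule sum.cong[OF refl])
    apply (rule sum.swap)
    done
  also have "\<dots> = (\<Sum>a\<in>PiE K1 B. P1 a) * ((\<Sum>b\<in>PiE K1 B. P2 b) * F * (\<Sum>b\<in>PiE K2 B. P3 b)) * (\<Sum>a\<in>PiE K2 B. P4 a)"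
    by (rule distrib4[symmetric])
  finally show ?thesis unfolding e1 e2 e3 e4 by simp
qed


definition ck :: "(nat\<times>nat\<Rightarrow>nat) \<Rightarrow> nat \<Rightarrow> nat\<times>nat \<Rightarrow> real" where
  "ck j k s = (-1::real) powi ((int (j (2 * fst s + snd s + 1, k)) + 1) * (kdelta (j (1,k) + j (2,k) + j (3,k)) - 1))"

definition gk :: "(nat\<Rightarrow>real) \<Rightarrow> (nat\<Rightarrow>real) \<Rightarrow> (nat\<Rightarrow>real) \<Rightarrow> (nat \<Rightarrow> 'a::{real_normed_algebra_1,banach}) \<Rightarrow> (nat\<times>nat\<Rightarrow>nat) \<Rightarrow> nat \<Rightarrow> nat\<times>nat \<Rightarrow> 'a" where
  "gk x y u i j k s = ck j k s *\<^sub>R exp ((((-1)^snd s * (x k - (-1)^fst s * y k)) * u k) *\<^sub>R i k)"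

definition wv :: "(nat\<Rightarrow>real) \<Rightarrow> (nat\<Rightarrow>real) \<Rightarrow> (nat\<Rightarrow>nat) \<Rightarrow> (nat\<Rightarrow>nat) \<Rightarrow> nat \<Rightarrow> real" where
  "wv x y \<phi> \<gamma> k = (-1)^\<gamma> k * (x k - (-1)^\<phi> k * y k)"

definition Iw :: "nat \<Rightarrow> nat \<Rightarrow> (nat\<Rightarrow>real) \<Rightarrow> (nat\<Rightarrow>real) \<Rightarrow> (nat\<Rightarrow>real) \<Rightarrow> (nat \<Rightarrow> 'a::{real_normed_algebra_1,banach}) \<Rightarrow> 'a \<Rightarrow> (nat\<Rightarrow>nat) \<Rightarrow> (nat\<Rightarrow>nat) \<Rightarrow> 'a" where
  "Iw \<mu> m x y u i F \<phi> \<gamma> = revprod \<mu> 1 (\<lambda>k. exp ((wv x y \<phi> \<gamma> k * u k) *\<^sub>R i k)) * F *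
      revprod m (Suc \<mu>) (\<lambda>k. exp ((wv x y \<phi> \<gamma> k * u k) *\<^sub>R i k))"

lemma distrib2:
  fixes F :: "'a::ring_1"
  shows "(\<Sum>b1\<in>B1. f2 b1) * F * (\<Sum>b2\<in>B2. f3 b2) = (\<Sum>b1\<in>B1. \<Sum>b2\<in>B2. f2 b1 * F * f3 b2)"
  by (simp only: sum_distrib_left[symmetric] sum_distrib_right[symmetric])

lemma prod_list_cong_set:
  "(\<And>k. k \<in> set l \<Longrightarrow> f k = g k) \<Longrightarrow> prod_list (map f l) = prod_list (map g l)"
  by (intro arg_cong[where f=prod_list] map_cong) auto

lemma R2:
  fixes i :: "nat \<Rightarrow> 'a::{real_normed_algebra_1,banach}"
  assumes mu: "\<mu> \<le> m"
  shows "(\<Sum>\<phi>\<in>bits m. \<Sum>\<gamma>\<in>bits m. coef m j \<phi> \<gamma> *\<^sub>R Iw \<mu> m x y u i F \<phi> \<gamma>)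
    = revprod \<mu> 1 (\<lambda>k. \<Sum>s\<in>{0,1}\<times>{0,1}. gk x y u i j k s) * F * revprod m (Suc \<mu>) (\<lambda>k. \<Sum>s\<in>{0,1}\<times>{0,1}. gk x y u i j k s)"
proof -
  define K1 where "K1 = {1..\<mu>}"
  define K2 where "K2 = {Suc \<mu>..m}"
  define K where "K = {1..m}"
  define l1 where "l1 = rev [1..<Suc \<mu>]"
  define l2 where "l2 = rev [Suc \<mu>..<Suc m]"
  have KK: "K = K1 \<union> K2" using mu unfolding K_def K1_def K2_def by auto
  have dK: "K1 \<inter> K2 = {}" unfolding K1_def K2_def by auto
  have sl1: "set l1 = K1" unfolding l1_def K1_def by auto
  have sl2: "set l2 = K2" unfolding l2_def K2_def by auto
  have dl1: "distinct l1" and dl2: "distinct l2" unfolding l1_def l2_def by auto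
  define Q1 where "Q1 = (\<lambda>\<sigma>. prod_list (map (\<lambda>k. gk x y u i j k (\<sigma> k)) l1))"
  define Q2 where "Q2 = (\<lambda>\<sigma>. prod_list (map (\<lambda>k. gk x y u i j k (\<sigma> k)) l2))"
  define S where "S = (\<lambda>_::nat. {0::nat,1::nat} \<times> {0::nat,1::nat})"
  have bm: "bits m = PiE K (\<lambda>_. {0,1})" unfolding bits_def K_def by simp
  have H: "coef m j (\<lambda>k\<in>K. fst (\<sigma> k)) (\<lambda>k\<in>K. snd (\<sigma> k)) *\<^sub>R Iw \<mu> m x y u i F (\<lambda>k\<in>K. fst (\<sigma> k)) (\<lambda>k\<in>K. snd (\<sigma> k))
      = Q1 \<sigma> * F * Q2 \<sigma>" for \<sigma>
  proof -
    have c: "coef m j (\<lambda>k\<in>K. fst (\<sigma> k)) (\<lambda>k\<in>K. snd (\<sigma> k)) = (\<Prod>k\<in>K. ck j k (\<sigma> k))"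
      unfolding coef_def K_def ck_def by (rule prod.cong) auto
    also have "\<dots> = (\<Prod>k\<in>K1. ck j k (\<sigma> k)) * (\<Prod>k\<in>K2. ck j k (\<sigma> k))"
      unfolding KK by (rule prod.union_disjoint) (auto simp: K1_def K2_def dK)
    also have "\<dots> = prod_list (map (\<lambda>k. ck j k (\<sigma> k)) l1) * prod_list (map (\<lambda>k. ck j k (\<sigma> k)) l2)"
      unfolding sl1[symmetric] sl2[symmetric] prod.distinct_set_conv_list[OF dl1] prod.distinct_set_conv_list[OF dl2] ..
    finally have c': "coef m j (\<lambda>k\<in>K. fst (\<sigma> k)) (\<lambda>k\<in>K. snd (\<sigma> k)) = prod_list (map (\<lambda>k. ck j k (\<sigma> k)) l1) * prod_list (map (\<lambda>k. ck j k (\<sigma> k)) l2)" .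
    define E where "E = (\<lambda>k. exp ((((-1)^snd (\<sigma> k) * (x k - (-1)^fst (\<sigma> k) * y k)) * u k) *\<^sub>R i k))"
    have i1: "revprod \<mu> 1 (\<lambda>k. exp ((wv x y (\<lambda>k\<in>K. fst (\<sigma> k)) (\<lambda>k\<in>K. snd (\<sigma> k)) k * u k) *\<^sub>R i k)) = prod_list (map E l1)"
      unfolding revprod_def l1_def[symmetric] E_def
      by (rule prod_list_cong_set) (use sl1 KK in \<open>auto simp: wv_def\<close>)
    have i2: "revprod m (Suc \<mu>) (\<lambda>k. exp ((wv x y (\<lambda>k\<in>K. fst (\<sigma> k)) (\<lambda>k\<in>K. snd (\<sigma> k)) k * u k) *\<^sub>R i k)) = prod_list (map E l2)"
      unfolding revprod_def l2_def[symmetric] E_def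
      by (rule prod_list_cong_set) (use sl2 KK in \<open>auto simp: wv_def\<close>)
    have q1: "Q1 \<sigma> = prod_list (map (\<lambda>k. ck j k (\<sigma> k)) l1) *\<^sub>R prod_list (map E l1)"
      unfolding Q1_def gk_def E_def by (rule prod_list_scaleR)
    have q2: "Q2 \<sigma> = prod_list (map (\<lambda>k. ck j k (\<sigma> k)) l2) *\<^sub>R prod_list (map E l2)"
      unfolding Q2_def gk_def E_def by (rule prod_list_scaleR)
    show ?thesis unfolding c' Iw_def i1 i2 q1 q2 by (simp add: mult.assoc)
  qed
  have r1: "Q1 (restrict \<sigma> K1) = Q1 \<sigma>" for \<sigma>
    unfolding Q1_def by (rule prod_list_restrict) (simp add: sl1)
  have r2: "Q2 (restrict \<sigma> K2) = Q2 \<sigma>" for \<sigma>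
    unfolding Q2_def by (rule prod_list_restrict) (simp add: sl2)
  have "(\<Sum>\<phi>\<in>bits m. \<Sum>\<gamma>\<in>bits m. coef m j \<phi> \<gamma> *\<^sub>R Iw \<mu> m x y u i F \<phi> \<gamma>)
      = (\<Sum>\<sigma>\<in>PiE K S. Q1 \<sigma> * F * Q2 \<sigma>)"
    unfolding bm sum_PiE_pair S_def H ..
  also have "\<dots> = (\<Sum>\<sigma>\<in>PiE (K1 \<union> K2) S. Q1 (restrict \<sigma> K1) * F * Q2 (restrict \<sigma> K2))"
    unfolding r1 r2 KK ..
  also have "\<dots> = (\<Sum>\<sigma>1\<in>PiE K1 S. \<Sum>\<sigma>2\<in>PiE K2 S. Q1 \<sigma>1 * F * Q2 \<sigma>2)"
    by (rule sum_PiE_split[OF dK])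
  also have "\<dots> = (\<Sum>\<sigma>1\<in>PiE K1 S. Q1 \<sigma>1) * F * (\<Sum>\<sigma>2\<in>PiE K2 S. Q2 \<sigma>2)"
    by (rule distrib2[symmetric])
  also have "(\<Sum>\<sigma>1\<in>PiE K1 S. Q1 \<sigma>1) = revprod \<mu> 1 (\<lambda>k. \<Sum>s\<in>{0,1}\<times>{0,1}. gk x y u i j k s)"
    unfolding revprod_def l1_def[symmetric] Q1_def S_def sl1[symmetric]
    by (rule prod_list_sum_expand[OF dl1, symmetric])
  also have "(\<Sum>\<sigma>2\<in>PiE K2 S. Q2 \<sigma>2) = revprod m (Suc \<mu>) (\<lambda>k. \<Sum>s\<in>{0,1}\<times>{0,1}. gk x y u i j k s)"
    unfolding revprod_def l2_def[symmetric] Q2_def S_def sl2[symmetric]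
    by (rule prod_list_sum_expand[OF dl2, symmetric])
  finally show ?thesis .
qed


lemma jfacts:
  assumes j: "j \<in> jset m" and k: "k \<in> {1..m}"
  shows "(j (1,k), j (2,k), j (3,k)) \<in> {(0,0,0),(1,1,0),(1,0,1),(0,1,1)}" and "j (4,k) = 0"
    and "j (1,k) \<in> {0,1}" and "j (2,k) \<in> {0,1}" and "j (3,k) \<in> {0,1}"
proof -
  have jp: "j \<in> ({1..4} \<times> {1..m}) \<rightarrow>\<^sub>E {0,1}" and c: "j (1,k) + j (2,k) + j (3,k) \<in> {0,2}" "j (4,k) = 0"
    using j k unfolding jset_def by auto
  have "j (\<nu>,k) \<in> {0,1}" if "\<nu> \<in> {1..4}" for \<nu>
    using PiE_mem[OF jp, of "(\<nu>,k)"] that k by auto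
  then have a: "j (1,k) \<in> {0,1}" "j (2,k) \<in> {0,1}" "j (3,k) \<in> {0,1}" by auto
  then show "j (1,k) \<in> {0,1}" "j (2,k) \<in> {0,1}" "j (3,k) \<in> {0,1}" by auto
  show "(j (1,k), j (2,k), j (3,k)) \<in> {(0,0,0),(1,1,0),(1,0,1),(0,1,1)}"
    using a c by auto
  show "j (4,k) = 0" by (rule c(2))
qed

definition scj :: "(nat\<Rightarrow>real) \<Rightarrow> (nat\<Rightarrow>real) \<Rightarrow> (nat\<Rightarrow>real) \<Rightarrow> (nat\<times>nat\<Rightarrow>nat) \<Rightarrow> nat \<Rightarrow> real" where
  "scj x y u j k = (if j (1,k) = 0 then cos (x k * u k) else sin (x k * u k)) * (if j (2,k) = 0 then cos (y k * u k) else sin (y k * u k))"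

lemma R3:
  fixes i :: "nat \<Rightarrow> 'a::{real_normed_algebra_1,banach}"
  assumes j: "j \<in> jset m" and k: "k \<in> {1..m}" and ik: "i k * i k = -1"
  shows "(\<Sum>s\<in>{0,1}\<times>{0,1}. gk x y u i j k s) = (4 * scj x y u j k) *\<^sub>R (i k ^ j (3,k))"
proof -
  define w where "w = (\<lambda>s::nat\<times>nat. ((-1)^snd s * (x k - (-1)^fst s * y k)) * u k)"
  have e: "gk x y u i j k s = (ck j k s * cos (w s)) *\<^sub>R 1 + (ck j k s * sin (w s)) *\<^sub>R i k" for s
    unfolding gk_def w_def[symmetric] exp_sq_m1[OF ik] by (simp add: scaleR_add_right w_def)
  have sm: "(\<Sum>s\<in>{0,1}\<times>{0,1}. gk x y u i j k s) = (\<Sum>s\<in>{0,1}\<times>{0,1}. ck j k s * cos (w s)) *\<^sub>R 1 + (\<Sum>s\<in>{0,1}\<times>{0,1}. ck j k s * sin (w s)) *\<^sub>R i k"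
    unfolding e sum.distrib scaleR_sum_left ..
  have pr: "(\<Sum>s\<in>{0,1}\<times>{0,1}. ck j k s * cos (w s)) = (if j (3,k) = 0 then 4 * scj x y u j k else 0) \<and>
         (\<Sum>s\<in>{0,1}\<times>{0,1}. ck j k s * sin (w s)) = (if j (3,k) = 0 then 0 else 4 * scj x y u j k)"
    using perk_real[of "\<lambda>\<nu>. j (\<nu>,k)" "x k" "y k" "u k", OF jfacts(1,2)[OF j k]]
    unfolding ck_def w_def scj_def by simp
  show ?thesis
    using jfacts(5)[OF j k] pr unfolding sm by auto
qed


definition Lj :: "nat \<Rightarrow> (nat \<Rightarrow> 'a::{real_normed_algebra_1,banach}) \<Rightarrow> (nat\<times>nat\<Rightarrow>nat) \<Rightarrow> 'a" where
  "Lj \<mu> i j = revprod \<mu> 1 (\<lambda>k. i k ^ j (1,k)) * ordprod 1 \<mu> (\<lambda>k. (- i k) ^ j (2,k)) * ordprod 1 \<mu> (\<lambda>k. (- i k) ^ j (3,k))"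

definition Rj :: "nat \<Rightarrow> nat \<Rightarrow> (nat \<Rightarrow> 'a::{real_normed_algebra_1,banach}) \<Rightarrow> (nat\<times>nat\<Rightarrow>nat) \<Rightarrow> 'a" where
  "Rj \<mu> m i j = ordprod (Suc \<mu>) m (\<lambda>k. (- i k) ^ j (3,k)) * ordprod (Suc \<mu>) m (\<lambda>k. (- i k) ^ j (2,k)) * revprod m (Suc \<mu>) (\<lambda>k. i k ^ j (1,k))"

lemma pow01_inv:
  fixes q :: "'a::ring_1"
  assumes "q * q = -1" "c \<in> {0::nat,1}"
  shows "(- q) ^ c * q ^ c = 1" "q ^ c * (- q) ^ c = 1"
  using assms by auto

lemma prod_list_distinct_set:
  "distinct l \<Longrightarrow> prod_list (map f l) = prod f (set l)"
  by (simp add: prod.distinct_set_conv_list)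

lemma R4:
  fixes i :: "nat \<Rightarrow> 'a::{real_normed_algebra_1,banach}"
  assumes mu: "\<mu> \<le> m" and ii: "\<forall>k\<in>{1..m}. i k * i k = -1" and j: "j \<in> jset m"
  shows "Lj \<mu> i j * (revprod \<mu> 1 (\<lambda>k. \<Sum>s\<in>{0,1}\<times>{0,1}. gk x y u i j k s) * F * revprod m (Suc \<mu>) (\<lambda>k. \<Sum>s\<in>{0,1}\<times>{0,1}. gk x y u i j k s)) * Rj \<mu> m i j
    = (4^m) *\<^sub>R XX \<mu> m x y u i F (\<lambda>k\<in>{1..m}. j (1,k)) (\<lambda>k\<in>{1..m}. j (2,k))"
proof -
  define K1 where "K1 = {1..\<mu>}"
  define K2 where "K2 = {Suc \<mu>..m}"
  define l1 where "l1 = [1..<Suc \<mu>]"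
  define l2 where "l2 = [Suc \<mu>..<Suc m]"
  have sl1: "set l1 = K1" "set (rev l1) = K1" unfolding l1_def K1_def by auto
  have sl2: "set l2 = K2" "set (rev l2) = K2" unfolding l2_def K2_def by auto
  have dl: "distinct l1" "distinct (rev l1)" "distinct l2" "distinct (rev l2)" unfolding l1_def l2_def by auto
  have K1m: "\<And>k. k \<in> K1 \<Longrightarrow> k \<in> {1..m}" and K2m: "\<And>k. k \<in> K2 \<Longrightarrow> k \<in> {1..m}"
    using mu unfolding K1_def K2_def by auto
  define fx where "fx = (\<lambda>k. if j (1,k) = 0 then cos (x k * u k) else sin (x k * u k))"
  define fy where "fy = (\<lambda>k. if j (2,k) = 0 then cos (y k * u k) else sin (y k * u k))"
  define RV1 where "RV1 = revprod \<mu> 1 (\<lambda>k. i k ^ j (1,k))"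
  define O2 where "O2 = ordprod 1 \<mu> (\<lambda>k. (- i k) ^ j (2,k))"
  define O3 where "O3 = ordprod 1 \<mu> (\<lambda>k. (- i k) ^ j (3,k))"
  define RV3 where "RV3 = revprod \<mu> 1 (\<lambda>k. i k ^ j (3,k))"
  define RV1' where "RV1' = revprod m (Suc \<mu>) (\<lambda>k. i k ^ j (1,k))"
  define O2' where "O2' = ordprod (Suc \<mu>) m (\<lambda>k. (- i k) ^ j (2,k))"
  define O3' where "O3' = ordprod (Suc \<mu>) m (\<lambda>k. (- i k) ^ j (3,k))"
  define RV3' where "RV3' = revprod m (Suc \<mu>) (\<lambda>k. i k ^ j (3,k))"
  define s1 where "s1 = prod_list (map (\<lambda>k. 4 * scj x y u j k) (rev l1))"
  define s2 where "s2 = prod_list (map (\<lambda>k. 4 * scj x y u j k) (rev l2))"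
  have G1: "revprod \<mu> 1 (\<lambda>k. \<Sum>s\<in>{0,1}\<times>{0,1}. gk x y u i j k s) = s1 *\<^sub>R RV3"
  proof -
    have "revprod \<mu> 1 (\<lambda>k. \<Sum>s\<in>{0,1}\<times>{0,1}. gk x y u i j k s) = prod_list (map (\<lambda>k. (4 * scj x y u j k) *\<^sub>R (i k ^ j (3,k))) (rev l1))"
      unfolding revprod_def l1_def[symmetric]
      by (rule prod_list_cong_set) (rule R3[OF j], use sl1 K1m ii in auto)
    then show ?thesis unfolding prod_list_scaleR s1_def RV3_def revprod_def l1_def .
  qed
  have G2: "revprod m (Suc \<mu>) (\<lambda>k. \<Sum>s\<in>{0,1}\<times>{0,1}. gk x y u i j k s) = s2 *\<^sub>R RV3'"
  proof -
    have "revprod m (Suc \<mu>) (\<lambda>k. \<Sum>s\<in>{0,1}\<times>{0,1}. gk x y u i j k s) = prod_list (map (\<lambda>k. (4 * scj x y u j k) *\<^sub>R (i k ^ j (3,k))) (rev l2))"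
      unfolding revprod_def l2_def[symmetric]
      by (rule prod_list_cong_set) (rule R3[OF j], use sl2 K2m ii in auto)
    then show ?thesis unfolding prod_list_scaleR s2_def RV3'_def revprod_def l2_def .
  qed
  have T1: "O3 * RV3 = 1"
    unfolding O3_def RV3_def ordprod_def revprod_def l1_def[symmetric]
    by (rule prod_list_telescope) (intro ballI pow01_inv(1), use sl1 K1m ii jfacts(5)[OF j] in auto)
  have T2: "RV3' * O3' = 1"
  proof -
    have "prod_list (map (\<lambda>k. i k ^ j (3,k)) (rev l2)) * prod_list (map (\<lambda>k. (- i k) ^ j (3,k)) (rev (rev l2))) = 1"
      by (rule prod_list_telescope) (intro ballI pow01_inv(2), use sl2 K2m ii jfacts(5)[OF j] in auto)
    then show ?thesis unfolding O3'_def RV3'_def ordprod_def revprod_def l2_def by simp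
  qed
  have T1': "O3 * (RV3 * Z) = Z" for Z using T1 by (simp add: mult.assoc[symmetric])
  have T2': "RV3' * (O3' * Z) = Z" for Z using T2 by (simp add: mult.assoc[symmetric])
  have LHS: "Lj \<mu> i j * (s1 *\<^sub>R RV3 * F * s2 *\<^sub>R RV3') * Rj \<mu> m i j = (s1 * s2) *\<^sub>R (RV1 * (O2 * F * O2') * RV1')"
    unfolding Lj_def Rj_def RV1_def[symmetric] O2_def[symmetric] O3_def[symmetric] RV1'_def[symmetric] O2'_def[symmetric] O3'_def[symmetric]
    by (simp add: mult.assoc T1' T2')
  define a where "a = (\<lambda>k\<in>{1..m}. j (1,k))"
  define b where "b = (\<lambda>k\<in>{1..m}. j (2,k))"
  have X1: "revprod \<mu> 1 (\<lambda>k. hx x u i k (a k)) = prod_list (map fx (rev l1)) *\<^sub>R RV1"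
  proof -
    have "revprod \<mu> 1 (\<lambda>k. hx x u i k (a k)) = prod_list (map (\<lambda>k. fx k *\<^sub>R i k ^ j (1,k)) (rev l1))"
      unfolding revprod_def l1_def[symmetric]
      by (rule prod_list_cong_set) (use sl1 K1m in \<open>auto simp: hx_def a_def fx_def\<close>)
    then show ?thesis unfolding prod_list_scaleR RV1_def revprod_def l1_def .
  qed
  have X2: "ordprod 1 \<mu> (\<lambda>k. hy y u i k (b k)) = prod_list (map fy l1) *\<^sub>R O2"
  proof -
    have "ordprod 1 \<mu> (\<lambda>k. hy y u i k (b k)) = prod_list (map (\<lambda>k. fy k *\<^sub>R (- i k) ^ j (2,k)) l1)"
      unfolding ordprod_def l1_def[symmetric]
      by (rule prod_list_cong_set) (use sl1 K1m in \<open>auto simp: hy_def b_def fy_def\<close>)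
    then show ?thesis unfolding prod_list_scaleR O2_def ordprod_def l1_def .
  qed
  have X3: "ordprod (Suc \<mu>) m (\<lambda>k. hy y u i k (b k)) = prod_list (map fy l2) *\<^sub>R O2'"
  proof -
    have "ordprod (Suc \<mu>) m (\<lambda>k. hy y u i k (b k)) = prod_list (map (\<lambda>k. fy k *\<^sub>R (- i k) ^ j (2,k)) l2)"
      unfolding ordprod_def l2_def[symmetric]
      by (rule prod_list_cong_set) (use sl2 K2m in \<open>auto simp: hy_def b_def fy_def\<close>)
    then show ?thesis unfolding prod_list_scaleR O2'_def ordprod_def l2_def .
  qed
  have X4: "revprod m (Suc \<mu>) (\<lambda>k. hx x u i k (a k)) = prod_list (map fx (rev l2)) *\<^sub>R RV1'"
  proof -
    have "revprod m (Suc \<mu>) (\<lambda>k. hx x u i k (a k)) = prod_list (map (\<lambda>k. fx k *\<^sub>R i k ^ j (1,k)) (rev l2))"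
      unfolding revprod_def l2_def[symmetric]
      by (rule prod_list_cong_set) (use sl2 K2m in \<open>auto simp: hx_def a_def fx_def\<close>)
    then show ?thesis unfolding prod_list_scaleR RV1'_def revprod_def l2_def .
  qed
  have XXe: "XX \<mu> m x y u i F a b = (prod_list (map fx (rev l1)) * prod_list (map fy l1) * prod_list (map fy l2) * prod_list (map fx (rev l2)))
      *\<^sub>R (RV1 * (O2 * F * O2') * RV1')"
    unfolding XX_def X1 X2 X3 X4 by simp
  have scj: "scj x y u j k = fx k * fy k" for k unfolding scj_def fx_def fy_def ..
  have cK1: "card K1 = \<mu>" and cK2: "card K2 = m - \<mu>" unfolding K1_def K2_def by auto
  have sc: "s1 * s2 = 4^m * (prod_list (map fx (rev l1)) * prod_list (map fy l1) * prod_list (map fy l2) * prod_list (map fx (rev l2)))"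
  proof -
    have "s1 = 4^\<mu> * (\<Prod>k\<in>K1. fx k) * (\<Prod>k\<in>K1. fy k)"
      unfolding s1_def prod_list_distinct_set[OF dl(2)] sl1 scj by (simp add: prod.distrib cK1)
    moreover have "s2 = 4^(m-\<mu>) * (\<Prod>k\<in>K2. fx k) * (\<Prod>k\<in>K2. fy k)"
      unfolding s2_def prod_list_distinct_set[OF dl(4)] sl2 scj by (simp add: prod.distrib cK2)
    moreover have "(4::real)^\<mu> * 4^(m-\<mu>) = 4^m" using mu by (simp add: power_add[symmetric])
    ultimately show ?thesis
      unfolding prod_list_distinct_set[OF dl(1)] prod_list_distinct_set[OF dl(2)]
        prod_list_distinct_set[OF dl(3)] prod_list_distinct_set[OF dl(4)] sl1 sl2
      by (simp add: algebra_simps)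
  qed
  show ?thesis
    unfolding G1 G2 LHS a_def[symmetric] b_def[symmetric] XXe sc by simp
qed


definition mkj :: "nat \<Rightarrow> (nat \<Rightarrow> nat) \<times> (nat \<Rightarrow> nat) \<Rightarrow> (nat \<times> nat \<Rightarrow> nat)" where
  "mkj m p = restrict (\<lambda>q. if fst q = 1 then fst p (snd q) else if fst q = 2 then snd p (snd q)
      else if fst q = 3 then (fst p (snd q) + snd p (snd q)) mod 2 else 0) ({1..4} \<times> {1..m})"

lemma jset_reindex:
  "(\<Sum>j\<in>jset m. G (\<lambda>k\<in>{1..m}. j (1,k)) (\<lambda>k\<in>{1..m}. j (2,k))) = (\<Sum>a\<in>bits m. \<Sum>b\<in>bits m. G a b)"
proof -
  have "(\<Sum>j\<in>jset m. G (\<lambda>k\<in>{1..m}. j (1,k)) (\<lambda>k\<in>{1..m}. j (2,k))) = (\<Sum>p\<in>bits m \<times> bits m. G (fst p) (snd p))"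
  proof (rule sum.reindex_bij_witness[where i="mkj m" and j="\<lambda>j. (\<lambda>k\<in>{1..m}. j (1,k), \<lambda>k\<in>{1..m}. j (2,k))"])
    fix j assume j: "j \<in> jset m"
    have jp: "j \<in> ({1..4} \<times> {1..m}) \<rightarrow>\<^sub>E {0,1}" using j unfolding jset_def by auto
    show "mkj m (\<lambda>k\<in>{1..m}. j (1,k), \<lambda>k\<in>{1..m}. j (2,k)) = j"
    proof (rule ext)
      fix q
      show "mkj m (\<lambda>k\<in>{1..m}. j (1,k), \<lambda>k\<in>{1..m}. j (2,k)) q = j q"
      proof (cases "q \<in> {1..4} \<times> {1..m}")
        case True
        then obtain \<nu> k where q: "q = (\<nu>,k)" and \<nu>: "\<nu> \<in> {1..4}" and k: "k \<in> {1..m}" by auto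
        have "\<nu> = 1 \<or> \<nu> = 2 \<or> \<nu> = 3 \<or> \<nu> = 4" using \<nu> by auto
        then show ?thesis using jfacts[OF j k] k unfolding q mkj_def by auto
      next
        case False
        then show ?thesis unfolding mkj_def using PiE_arb[OF jp False] by simp
      qed
    qed
  next
    fix j assume j: "j \<in> jset m"
    show "(\<lambda>k\<in>{1..m}. j (1,k), \<lambda>k\<in>{1..m}. j (2,k)) \<in> bits m \<times> bits m"
      unfolding bits_def using jfacts(3,4)[OF j] by auto
  next
    fix p assume p: "p \<in> bits m \<times> bits m"
    obtain \<alpha> \<beta> where pp: "p = (\<alpha>,\<beta>)" by (cases p)
    have \<alpha>: "\<alpha> \<in> {1..m} \<rightarrow>\<^sub>E {0,1}" and \<beta>: "\<beta> \<in> {1..m} \<rightarrow>\<^sub>E {0,1}" using p pp unfolding bits_def by auto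
    have "(\<lambda>k\<in>{1..m}. mkj m p (1,k)) = \<alpha>"
    proof (rule ext)
      fix k show "(\<lambda>k\<in>{1..m}. mkj m p (1,k)) k = \<alpha> k"
      proof (cases "k \<in> {1..m}")
        case True then show ?thesis by (simp add: mkj_def pp)
      next
        case False then show ?thesis using PiE_arb[OF \<alpha> False] False by auto
      qed
    qed
    moreover have "(\<lambda>k\<in>{1..m}. mkj m p (2,k)) = \<beta>"
    proof (rule ext)
      fix k show "(\<lambda>k\<in>{1..m}. mkj m p (2,k)) k = \<beta> k"
      proof (cases "k \<in> {1..m}")
        case True then show ?thesis by (simp add: mkj_def pp)
      next
        case False then show ?thesis using PiE_arb[OF \<beta> False] False by auto
      qed
    qed
    ultimately show "(\<lambda>k\<in>{1..m}. mkj m p (1,k), \<lambda>k\<in>{1..m}. mkj m p (2,k)) = p" using pp by simp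
  next
    fix p assume p: "p \<in> bits m \<times> bits m"
    obtain \<alpha> \<beta> where pp: "p = (\<alpha>,\<beta>)" by (cases p)
    have \<alpha>: "\<alpha> \<in> {1..m} \<rightarrow>\<^sub>E {0,1}" and \<beta>: "\<beta> \<in> {1..m} \<rightarrow>\<^sub>E {0,1}" using p pp unfolding bits_def by auto
    have v: "\<alpha> k \<in> {0,1}" "\<beta> k \<in> {0,1}" if "k \<in> {1..m}" for k
      using PiE_mem[OF \<alpha> that] PiE_mem[OF \<beta> that] by auto
    have m1: "mkj m p \<in> ({1..4} \<times> {1..m}) \<rightarrow>\<^sub>E {0,1}"
    proof (rule PiE_I)
      fix q :: "nat \<times> nat" assume q: "q \<in> {1..4} \<times> {1..m}"
      then show "mkj m p q \<in> {0,1}" using v[of "snd q"] unfolding mkj_def pp by (auto simp: mem_Times_iff)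
    next
      fix q :: "nat \<times> nat" assume "q \<notin> {1..4} \<times> {1..m}" then show "mkj m p q = undefined" unfolding mkj_def by simp
    qed
    have m2: "mkj m p (1,k) + mkj m p (2,k) + mkj m p (3,k) \<in> {0,2} \<and> mkj m p (4,k) = 0" if k: "k \<in> {1..m}" for k
      using v[OF k] k unfolding mkj_def pp by auto
    show "mkj m p \<in> jset m" unfolding jset_def using m1 m2 by blast
  next
    fix j assume "j \<in> jset m"
    show "G (fst (\<lambda>k\<in>{1..m}. j (1,k), \<lambda>k\<in>{1..m}. j (2,k))) (snd (\<lambda>k\<in>{1..m}. j (1,k), \<lambda>k\<in>{1..m}. j (2,k))) = G (\<lambda>k\<in>{1..m}. j (1,k)) (\<lambda>k\<in>{1..m}. j (2,k))"
      by simp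
  qed
  also have "\<dots> = (\<Sum>a\<in>bits m. \<Sum>b\<in>bits m. G a b)"
    by (simp only: sum.cartesian_product case_prod_beta')
  finally show ?thesis .
qed

lemma PW:
  fixes i :: "nat \<Rightarrow> 'a::{real_normed_algebra_1,banach}"
  assumes mu: "\<mu> \<le> m" and ii: "\<forall>k\<in>{1..m}. i k * i k = -1"
  shows "revprod \<mu> 1 (\<lambda>k. exp ((x k * u k) *\<^sub>R i k)) *
     (ordprod 1 \<mu> (\<lambda>k. exp ((- (y k * u k)) *\<^sub>R i k)) * F * ordprod (Suc \<mu>) m (\<lambda>k. exp ((- (y k * u k)) *\<^sub>R i k))) *
     revprod m (Suc \<mu>) (\<lambda>k. exp ((x k * u k) *\<^sub>R i k))
   = (1 / 4^m) *\<^sub>R (\<Sum>j\<in>jset m. \<Sum>\<phi>\<in>bits m. \<Sum>\<gamma>\<in>bits m. coef m j \<phi> \<gamma> *\<^sub>R (Lj \<mu> i j * Iw \<mu> m x y u i F \<phi> \<gamma> * Rj \<mu> m i j))"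
proof -
  have inner: "(\<Sum>\<phi>\<in>bits m. \<Sum>\<gamma>\<in>bits m. coef m j \<phi> \<gamma> *\<^sub>R (Lj \<mu> i j * Iw \<mu> m x y u i F \<phi> \<gamma> * Rj \<mu> m i j))
      = (4^m) *\<^sub>R XX \<mu> m x y u i F (\<lambda>k\<in>{1..m}. j (1,k)) (\<lambda>k\<in>{1..m}. j (2,k))" if j: "j \<in> jset m" for j
  proof -
    have "(\<Sum>\<phi>\<in>bits m. \<Sum>\<gamma>\<in>bits m. coef m j \<phi> \<gamma> *\<^sub>R (Lj \<mu> i j * Iw \<mu> m x y u i F \<phi> \<gamma> * Rj \<mu> m i j))
      = Lj \<mu> i j * (\<Sum>\<phi>\<in>bits m. \<Sum>\<gamma>\<in>bits m. coef m j \<phi> \<gamma> *\<^sub>R Iw \<mu> m x y u i F \<phi> \<gamma>) * Rj \<mu> m i j"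
      by (simp add: sum_distrib_left sum_distrib_right)
    also have "\<dots> = (4^m) *\<^sub>R XX \<mu> m x y u i F (\<lambda>k\<in>{1..m}. j (1,k)) (\<lambda>k\<in>{1..m}. j (2,k))"
      unfolding R2[OF mu] by (rule R4[OF mu ii j])
    finally show ?thesis .
  qed
  have "(\<Sum>j\<in>jset m. \<Sum>\<phi>\<in>bits m. \<Sum>\<gamma>\<in>bits m. coef m j \<phi> \<gamma> *\<^sub>R (Lj \<mu> i j * Iw \<mu> m x y u i F \<phi> \<gamma> * Rj \<mu> m i j))
     = (\<Sum>j\<in>jset m. (4^m) *\<^sub>R XX \<mu> m x y u i F (\<lambda>k\<in>{1..m}. j (1,k)) (\<lambda>k\<in>{1..m}. j (2,k)))"
    by (rule sum.cong[OF refl]) (rule inner)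
  also have "\<dots> = (4^m) *\<^sub>R (\<Sum>a\<in>bits m. \<Sum>b\<in>bits m. XX \<mu> m x y u i F a b)"
    unfolding scaleR_sum_right[symmetric] jset_reindex[of "XX \<mu> m x y u i F" m] ..
  finally show ?thesis unfolding LEXP[OF mu ii] by simp
qed


lemma comp_meas: "k \<in> {1..m} \<Longrightarrow> (\<lambda>u. u k) \<in> borel_measurable (Rm m)"
  using measurable_component_singleton[of k "{1..m}" "\<lambda>_. lborel"] unfolding Rm_def by simp

lemma exp_meas:
  fixes q :: "'a::{real_normed_algebra_1,banach,second_countable_topology}"
  assumes q: "q * q = -1" and k: "k \<in> {1..m}"
  shows "(\<lambda>u. exp ((c * u k) *\<^sub>R q)) \<in> borel_measurable (Rm m)"
proof -
  have "(\<lambda>u. exp ((c * u k) *\<^sub>R q)) = (\<lambda>u. cos (c * u k) *\<^sub>R 1 + sin (c * u k) *\<^sub>R q)"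
    using exp_sq_m1[OF q] by simp
  moreover have "(\<lambda>u. cos (c * u k) *\<^sub>R 1 + sin (c * u k) *\<^sub>R q) \<in> borel_measurable (Rm m)"
    using comp_meas[OF k] by measurable
  ultimately show ?thesis by simp
qed

lemma exp_norm:
  fixes q :: "'a::{real_normed_algebra_1,banach}"
  assumes q: "q * q = -1"
  shows "norm (exp (t *\<^sub>R q)) \<le> 1 + norm q"
proof -
  have "norm (exp (t *\<^sub>R q)) \<le> norm (cos t *\<^sub>R (1::'a)) + norm (sin t *\<^sub>R q)"
    unfolding exp_sq_m1[OF q] by (rule norm_triangle_ineq)
  also have "\<dots> = \<bar>cos t\<bar> + \<bar>sin t\<bar> * norm q" by simp
  also have "\<dots> \<le> 1 + 1 * norm q"
    by (intro add_mono mult_right_mono) (auto simp: abs_cos_le_one abs_sin_le_one)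
  finally show ?thesis by simp
qed

lemma prod_list_meas:
  fixes g :: "nat \<Rightarrow> 'b \<Rightarrow> 'a::{real_normed_algebra_1,second_countable_topology}"
  assumes "\<forall>k\<in>set l. g k \<in> borel_measurable M"
  shows "(\<lambda>u. prod_list (map (\<lambda>k. g k u) l)) \<in> borel_measurable M"
  using assms
proof (induction l)
  case Nil then show ?case by simp
next
  case (Cons k l)
  then have "g k \<in> borel_measurable M" "(\<lambda>u. prod_list (map (\<lambda>k. g k u) l)) \<in> borel_measurable M" by auto
  then have "(\<lambda>u. g k u * prod_list (map (\<lambda>k. g k u) l)) \<in> borel_measurable M"
    by (rule borel_measurable_times)
  then show ?case by simp
qed

lemma INT:
  fixes i :: "nat \<Rightarrow> 'a::{real_normed_algebra_1,banach,second_countable_topology}"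
  assumes mu: "\<mu> \<le> m" and ii: "\<forall>k\<in>{1..m}. i k * i k = -1" and F: "integrable (Rm m) F"
  shows "integrable (Rm m) (\<lambda>u. revprod \<mu> 1 (\<lambda>k. exp ((w k * u k) *\<^sub>R i k)) * F u * revprod m (Suc \<mu>) (\<lambda>k. exp ((w k * u k) *\<^sub>R i k)))"
proof -
  define l1 where "l1 = rev [1..<Suc \<mu>]"
  define l2 where "l2 = rev [Suc \<mu>..<Suc m]"
  have s1: "k \<in> set l1 \<Longrightarrow> k \<in> {1..m}" and s2: "k \<in> set l2 \<Longrightarrow> k \<in> {1..m}" for k
    using mu unfolding l1_def l2_def by auto
  define C1 where "C1 = prod_list (map (\<lambda>k. 1 + norm (i k)) l1)"
  define C2 where "C2 = prod_list (map (\<lambda>k. 1 + norm (i k)) l2)"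
  have C1: "0 \<le> C1" unfolding C1_def by (rule prod_list_nonneg) (auto intro: add_nonneg_nonneg)
  have C2: "0 \<le> C2" unfolding C2_def by (rule prod_list_nonneg) (auto intro: add_nonneg_nonneg)
  have m1: "(\<lambda>u. prod_list (map (\<lambda>k. exp ((w k * u k) *\<^sub>R i k)) l1)) \<in> borel_measurable (Rm m)"
    by (rule prod_list_meas) (intro ballI exp_meas, use s1 ii in auto)
  have m2: "(\<lambda>u. prod_list (map (\<lambda>k. exp ((w k * u k) *\<^sub>R i k)) l2)) \<in> borel_measurable (Rm m)"
    by (rule prod_list_meas) (intro ballI exp_meas, use s2 ii in auto)
  have n1: "norm (prod_list (map (\<lambda>k. exp ((w k * u k) *\<^sub>R i k)) l1)) \<le> C1" for u
    unfolding C1_def by (rule norm_prod_list_le) (intro ballI exp_norm, use s1 ii in auto)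
  have n2: "norm (prod_list (map (\<lambda>k. exp ((w k * u k) *\<^sub>R i k)) l2)) \<le> C2" for u
    unfolding C2_def by (rule norm_prod_list_le) (intro ballI exp_norm, use s2 ii in auto)
  show ?thesis
    unfolding revprod_def l1_def[symmetric] l2_def[symmetric]
  proof (rule Bochner_Integration.integrable_bound[where f="\<lambda>u. (C1 * C2) *\<^sub>R F u"])
    show "integrable (Rm m) (\<lambda>u. (C1 * C2) *\<^sub>R F u)" using F by simp
    show "(\<lambda>u. prod_list (map (\<lambda>k. exp ((w k * u k) *\<^sub>R i k)) l1) * F u * prod_list (map (\<lambda>k. exp ((w k * u k) *\<^sub>R i k)) l2)) \<in> borel_measurable (Rm m)"
      using m1 m2 borel_measurable_integrable[OF F] by (intro borel_measurable_times)
    show "AE u in Rm m. norm (prod_list (map (\<lambda>k. exp ((w k * u k) *\<^sub>R i k)) l1) * F u * prod_list (map (\<lambda>k. exp ((w k * u k) *\<^sub>R i k)) l2)) \<le> norm ((C1 * C2) *\<^sub>R F u)"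
    proof (rule AE_I2)
      fix u
      have "norm (prod_list (map (\<lambda>k. exp ((w k * u k) *\<^sub>R i k)) l1) * F u * prod_list (map (\<lambda>k. exp ((w k * u k) *\<^sub>R i k)) l2))
          \<le> norm (prod_list (map (\<lambda>k. exp ((w k * u k) *\<^sub>R i k)) l1)) * norm (F u) * norm (prod_list (map (\<lambda>k. exp ((w k * u k) *\<^sub>R i k)) l2))"
        by (rule order_trans[OF norm_mult_ineq mult_right_mono[OF norm_mult_ineq norm_ge_zero]])
      also have "\<dots> \<le> C1 * norm (F u) * C2"
        using n1[of u] n2[of u] C1 by (intro mult_mono) auto
      also have "\<dots> = norm ((C1 * C2) *\<^sub>R F u)" using C1 C2 by (simp add: abs_mult)
      finally show "norm (prod_list (map (\<lambda>k. exp ((w k * u k) *\<^sub>R i k)) l1) * F u * prod_list (map (\<lambda>k. exp ((w k * u k) *\<^sub>R i k)) l2)) \<le> norm ((C1 * C2) *\<^sub>R F u)" .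
    qed
  qed
qed


theorem theorem9:
  fixes m \<mu> :: nat
    and e i :: "nat \<Rightarrow> 'a::{real_normed_algebra_1,banach,second_countable_topology}"
    and f :: "(nat \<Rightarrow> real) \<Rightarrow> 'a"
    and x y :: "nat \<Rightarrow> real"
  assumes "is_Clifford_0m m e"
    and "\<forall>k\<in>{1..m}. i k * i k = -1"
    and "\<mu> \<le> m"
    and "integrable (Rm m) f"
    and "integrable (Rm m) (geo_FT m \<mu> i f)"
    and "\<forall>z\<in>space (Rm m). f z = geo_IFT m \<mu> i (geo_FT m \<mu> i f) z"
  shows "gen_transl m \<mu> i y f x =
    (1 / 4 ^ m) *\<^sub>R
    (\<Sum>j\<in>jset m. \<Sum>\<phi>\<in>bits m. \<Sum>\<gamma>\<in>bits m. coef m j \<phi> \<gamma> *\<^sub>R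
       (revprod \<mu> 1 (\<lambda>k. i k ^ j (1,k))
        * ordprod 1 \<mu> (\<lambda>k. (- i k) ^ j (2,k))
        * ordprod 1 \<mu> (\<lambda>k. (- i k) ^ j (3,k))
        * transl m (reflect m \<phi> y) (fgam m \<gamma> f) x
        * ordprod (Suc \<mu>) m (\<lambda>k. (- i k) ^ j (3,k))
        * ordprod (Suc \<mu>) m (\<lambda>k. (- i k) ^ j (2,k))
        * revprod m (Suc \<mu>) (\<lambda>k. i k ^ j (1,k))))"
proof -
  have ii: "\<forall>k\<in>{1..m}. i k * i k = -1" and mu: "\<mu> \<le> m" and Fint: "integrable (Rm m) (geo_FT m \<mu> i f)"
    using assms by auto
  define F where "F = geo_FT m \<mu> i f"
  define c0 where "c0 = (2 * pi) powr (- real m / 2)"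
  define g where "g = (\<lambda>\<phi> \<gamma> u. Iw \<mu> m x y u i (F u) \<phi> \<gamma>)"
  have gint: "integrable (Rm m) (g \<phi> \<gamma>)" for \<phi> \<gamma>
    unfolding g_def Iw_def F_def by (rule INT[OF mu ii Fint])
  define h where "h = (\<lambda>j \<phi> \<gamma> u. coef m j \<phi> \<gamma> *\<^sub>R (Lj \<mu> i j * g \<phi> \<gamma> u * Rj \<mu> m i j))"
  have hint: "integrable (Rm m) (h j \<phi> \<gamma>)" for j \<phi> \<gamma>
    unfolding h_def using gint[of \<phi> \<gamma>] by (intro integrable_scaleR_right integrable_mult_left integrable_mult_right)
  have tr: "transl m (reflect m \<phi> y) (fgam m \<gamma> f) x = c0 *\<^sub>R (\<integral>u. g \<phi> \<gamma> u \<partial>Rm m)" for \<phi> \<gamma>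
  proof -
    define z where "z = restrict (wv x y \<phi> \<gamma>) {1..m}"
    have "transl m (reflect m \<phi> y) (fgam m \<gamma> f) x = f z"
      unfolding transl_def fgam_def reflect_def z_def
    proof (rule arg_cong[where f=f], rule ext)
      fix k show "(\<lambda>k\<in>{1..m}. (- 1) ^ \<gamma> k * (\<lambda>k\<in>{1..m}. x k - (\<lambda>k\<in>{1..m}. (- 1) ^ \<phi> k * y k) k) k) k = restrict (wv x y \<phi> \<gamma>) {1..m} k"
        by (cases "k \<in> {1..m}") (auto simp: wv_def)
    qed
    also have "\<dots> = geo_IFT m \<mu> i F z"
      using assms(6) unfolding F_def by (auto simp: z_def Rm_def space_PiM)
    also have "\<dots> = c0 *\<^sub>R (\<integral>u. g \<phi> \<gamma> u \<partial>Rm m)"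
      unfolding geo_IFT_def c0_def g_def Iw_def
    proof (rule arg_cong[where f="\<lambda>t. _ *\<^sub>R t"], rule arg_cong[where f="\<lambda>t. integral\<^sup>L (Rm m) t"], rule ext)
      fix u
      have a: "revprod \<mu> 1 (\<lambda>k. exp ((z k * u k) *\<^sub>R i k)) = revprod \<mu> 1 (\<lambda>k. exp ((wv x y \<phi> \<gamma> k * u k) *\<^sub>R i k))"
        unfolding revprod_def by (rule prod_list_cong_set) (use mu in \<open>auto simp: z_def\<close>)
      have b: "revprod m (Suc \<mu>) (\<lambda>k. exp ((z k * u k) *\<^sub>R i k)) = revprod m (Suc \<mu>) (\<lambda>k. exp ((wv x y \<phi> \<gamma> k * u k) *\<^sub>R i k))"
        unfolding revprod_def by (rule prod_list_cong_set) (use mu in \<open>auto simp: z_def\<close>)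
      show "revprod \<mu> 1 (\<lambda>k. exp ((z k * u k) *\<^sub>R i k)) * F u * revprod m (Suc \<mu>) (\<lambda>k. exp ((z k * u k) *\<^sub>R i k)) =
        revprod \<mu> 1 (\<lambda>k. exp ((wv x y \<phi> \<gamma> k * u k) *\<^sub>R i k)) * F u * revprod m (Suc \<mu>) (\<lambda>k. exp ((wv x y \<phi> \<gamma> k * u k) *\<^sub>R i k))"
        unfolding a b ..
    qed
    finally show ?thesis .
  qed
  have tm9: "coef m j \<phi> \<gamma> *\<^sub>R
       (revprod \<mu> 1 (\<lambda>k. i k ^ j (1,k))
        * ordprod 1 \<mu> (\<lambda>k. (- i k) ^ j (2,k))
        * ordprod 1 \<mu> (\<lambda>k. (- i k) ^ j (3,k))
        * transl m (reflect m \<phi> y) (fgam m \<gamma> f) x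
        * ordprod (Suc \<mu>) m (\<lambda>k. (- i k) ^ j (3,k))
        * ordprod (Suc \<mu>) m (\<lambda>k. (- i k) ^ j (2,k))
        * revprod m (Suc \<mu>) (\<lambda>k. i k ^ j (1,k))) = c0 *\<^sub>R (\<integral>u. h j \<phi> \<gamma> u \<partial>Rm m)" for j \<phi> \<gamma>
  proof -
    have "revprod \<mu> 1 (\<lambda>k. i k ^ j (1,k))
        * ordprod 1 \<mu> (\<lambda>k. (- i k) ^ j (2,k))
        * ordprod 1 \<mu> (\<lambda>k. (- i k) ^ j (3,k))
        * transl m (reflect m \<phi> y) (fgam m \<gamma> f) x
        * ordprod (Suc \<mu>) m (\<lambda>k. (- i k) ^ j (3,k))
        * ordprod (Suc \<mu>) m (\<lambda>k. (- i k) ^ j (2,k))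
        * revprod m (Suc \<mu>) (\<lambda>k. i k ^ j (1,k))
       = Lj \<mu> i j * transl m (reflect m \<phi> y) (fgam m \<gamma> f) x * Rj \<mu> m i j"
      unfolding Lj_def Rj_def by (simp only: mult.assoc)
    also have "\<dots> = c0 *\<^sub>R (Lj \<mu> i j * (\<integral>u. g \<phi> \<gamma> u \<partial>Rm m) * Rj \<mu> m i j)"
      unfolding tr by simp
    also have "Lj \<mu> i j * (\<integral>u. g \<phi> \<gamma> u \<partial>Rm m) = (\<integral>u. Lj \<mu> i j * g \<phi> \<gamma> u \<partial>Rm m)"
      using gint[of \<phi> \<gamma>] by simp
    also have "(\<integral>u. Lj \<mu> i j * g \<phi> \<gamma> u \<partial>Rm m) * Rj \<mu> m i j = (\<integral>u. Lj \<mu> i j * g \<phi> \<gamma> u * Rj \<mu> m i j \<partial>Rm m)"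
      using gint[of \<phi> \<gamma>] by simp
    finally show ?thesis unfolding h_def by simp
  qed
  have "(1 / 4 ^ m) *\<^sub>R (\<Sum>j\<in>jset m. \<Sum>\<phi>\<in>bits m. \<Sum>\<gamma>\<in>bits m. c0 *\<^sub>R (\<integral>u. h j \<phi> \<gamma> u \<partial>Rm m))
     = c0 *\<^sub>R (\<integral>u. (1 / 4 ^ m) *\<^sub>R (\<Sum>j\<in>jset m. \<Sum>\<phi>\<in>bits m. \<Sum>\<gamma>\<in>bits m. h j \<phi> \<gamma> u) \<partial>Rm m)"
  proof -
    have "(\<integral>u. (\<Sum>j\<in>jset m. \<Sum>\<phi>\<in>bits m. \<Sum>\<gamma>\<in>bits m. h j \<phi> \<gamma> u) \<partial>Rm m)
       = (\<Sum>j\<in>jset m. \<integral>u. (\<Sum>\<phi>\<in>bits m. \<Sum>\<gamma>\<in>bits m. h j \<phi> \<gamma> u) \<partial>Rm m)"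
      by (rule Bochner_Integration.integral_sum) (simp add: hint)
    also have "\<dots> = (\<Sum>j\<in>jset m. \<Sum>\<phi>\<in>bits m. \<integral>u. (\<Sum>\<gamma>\<in>bits m. h j \<phi> \<gamma> u) \<partial>Rm m)"
      by (rule sum.cong[OF refl], rule Bochner_Integration.integral_sum) (simp add: hint)
    also have "\<dots> = (\<Sum>j\<in>jset m. \<Sum>\<phi>\<in>bits m. \<Sum>\<gamma>\<in>bits m. \<integral>u. h j \<phi> \<gamma> u \<partial>Rm m)"
      by (rule sum.cong[OF refl], rule sum.cong[OF refl], rule Bochner_Integration.integral_sum) (rule hint)
    finally have I: "(\<integral>u. (\<Sum>j\<in>jset m. \<Sum>\<phi>\<in>bits m. \<Sum>\<gamma>\<in>bits m. h j \<phi> \<gamma> u) \<partial>Rm m)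
       = (\<Sum>j\<in>jset m. \<Sum>\<phi>\<in>bits m. \<Sum>\<gamma>\<in>bits m. \<integral>u. h j \<phi> \<gamma> u \<partial>Rm m)" .
    have A: "(\<Sum>j\<in>jset m. \<Sum>\<phi>\<in>bits m. \<Sum>\<gamma>\<in>bits m. c0 *\<^sub>R (\<integral>u. h j \<phi> \<gamma> u \<partial>Rm m))
       = c0 *\<^sub>R (\<Sum>j\<in>jset m. \<Sum>\<phi>\<in>bits m. \<Sum>\<gamma>\<in>bits m. \<integral>u. h j \<phi> \<gamma> u \<partial>Rm m)"
      by (simp only: scaleR_sum_right)
    show ?thesis unfolding A integral_scaleR_right I by (simp add: mult.commute)
  qed
  moreover have "gen_transl m \<mu> i y f x = c0 *\<^sub>R (\<integral>u. (1 / 4 ^ m) *\<^sub>R (\<Sum>j\<in>jset m. \<Sum>\<phi>\<in>bits m. \<Sum>\<gamma>\<in>bits m. h j \<phi> \<gamma> u) \<partial>Rm m)"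
    unfolding gen_transl_def geo_IFT_def c0_def F_def[symmetric] h_def g_def
    unfolding PW[OF mu ii] ..
  ultimately show ?thesis unfolding tm9 by simp
qed


end
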